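(* Let $\alpha>0$, let $n$ be a positive integer and $F\in\mathcal{B}^{\alpha+n}$. Then there exists $A>0$ such that for every analytic vector-valued function $\mathbf{g}=(g_0,g_1,\dots,g_{n-1})$ (each $g_k\in H(\mathbb{D})$) with $\|\mathbf{g}\|_*<A$, every solution $f\in H(\mathbb{D})$ of the differential equation $$f^{(n)}+f^{(n-1)}g_{n-1}+\cdots+f'g_1+fg_0=F$$ belongs to $\mathcal{B}^{\alpha}$.
   Context: $\mathbb{D}$ is the open unit disc in $\mathbb{C}$ and $H(\mathbb{D})$ the space of analytic functions on $\mathbb{D}$. For $\gamma>0$, $\mathcal{B}^{\gamma}$ is the space of $f\in H(\mathbb{D})$ with $|f(0)|+\sup_{z\in\mathbb{D}}(1-|z|^2)^{\gamma}|f'(z)|<\infty$. For $\mathbf{g}=(g_0,\dots,g_{n-1})$, $\|\mathbf{g}\|_*=\max\{\|g_k\|_k:0\le k\le n-1\}$, where for $1\le k\le n-1$, $\|g\|_k=\sup_{z\in\mathbb{D}}(1-|z|^2)^{n-k}|g(z)|$, and $\|g\|_0=\sup_{z\in\mathbb{D}}(1-|z|^2)^{n}|g(z)|$ if $\alpha>1$, $\|g\|_0=\sup_{z\in\mathbb{D}}(1-|z|^2)^{n}\log\frac{2}{1-|z|^2}|g(z)|$ if $\alpha=1$, and $\|g\|_0=\sup_{z\in\mathbb{D}}(1-|z|^2)^{n+\alpha-1}|g(z)|$ if $0<\alpha<1$. *)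

theory Defs
  imports "HOL-Complex_Analysis.Complex_Analysis"
begin

definition bloch_type :: "real \<Rightarrow> (complex \<Rightarrow> complex) set" where
  "bloch_type \<gamma> = {f. f holomorphic_on ball 0 1 \<and>
      (\<exists>C. \<forall>z\<in>ball 0 1. (1 - (cmod z)\<^sup>2) powr \<gamma> * cmod (deriv f z) \<le> C)}"

definition coeff_weight :: "real \<Rightarrow> nat \<Rightarrow> nat \<Rightarrow> complex \<Rightarrow> real" where
  "coeff_weight \<alpha> n k z =
     (if k \<ge> 1 then (1 - (cmod z)\<^sup>2) ^ (n - k)
      else if \<alpha> > 1 then (1 - (cmod z)\<^sup>2) ^ n
      else if \<alpha> = 1 then (1 - (cmod z)\<^sup>2) ^ n * ln (2 / (1 - (cmod z)\<^sup>2))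
      else (1 - (cmod z)\<^sup>2) powr (real n + \<alpha> - 1))"

definition coeff_norm :: "real \<Rightarrow> nat \<Rightarrow> nat \<Rightarrow> (complex \<Rightarrow> complex) \<Rightarrow> ereal" where
  "coeff_norm \<alpha> n k g = (SUP z\<in>ball 0 1. ereal (coeff_weight \<alpha> n k z * cmod (g z)))"

definition vec_norm :: "real \<Rightarrow> nat \<Rightarrow> (nat \<Rightarrow> complex \<Rightarrow> complex) \<Rightarrow> ereal" where
  "vec_norm \<alpha> n g = (MAX k\<in>{..<n}. coeff_norm \<alpha> n k (g k))"

end

theory Submission
  imports Defs
begin

lemma radial_general:
  fixes h :: "complex \<Rightarrow> complex"
  assumes hol: "h holomorphic_on ball 0 1" and z: "cmod z < 1"
   and phic: "continuous_on {0..1} \<phi>"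
   and phid: "\<And>t. 0<t \<Longrightarrow> t<1 \<Longrightarrow> (\<phi> has_real_derivative \<phi>' t) (at t)"
   and bnd: "\<And>t. 0<t \<Longrightarrow> t<1 \<Longrightarrow> cmod z * cmod (deriv h (complex_of_real t * z)) \<le> \<phi>' t"
  shows "cmod (h z) \<le> cmod (h 0) + (\<phi> 1 - \<phi> 0)"
proof -
  define p where "p = (\<lambda>t::real. complex_of_real t * z)"
  have pin: "p t \<in> ball 0 1" if "t \<in> {0..1}" for t
  proof -
    have "cmod (p t) = \<bar>t\<bar> * cmod z" by (simp add: p_def norm_mult)
    also have "\<dots> \<le> cmod z" using that by (simp add: mult_left_le_one_le)
    finally show ?thesis using z by simp
  qed
  have pd: "(p has_vector_derivative z) (at t)" for t
    unfolding p_def by (auto intro!: derivative_eq_intros)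
  have c1: "continuous_on {0..1} (h \<circ> p)"
  proof (rule continuous_on_compose)
    show "continuous_on {0..1} p" unfolding p_def by (intro continuous_intros)
    show "continuous_on (p ` {0..1}) h"
      using holomorphic_on_imp_continuous_on[OF hol] pin
      by (meson continuous_on_subset image_subsetI)
  qed
  have "norm ((h \<circ> p) 1 - (h \<circ> p) 0) \<le> \<phi> 1 - \<phi> 0"
  proof (rule differentiable_bound_general[OF zero_less_one c1 phic])
    fix t :: real assume t: "0 < t" "t < 1"
    have "p t \<in> ball 0 1" using pin t by auto
    then have "(h has_field_derivative deriv h (p t)) (at (p t))"
      by (intro holomorphic_derivI[OF hol]) auto
    then show "((h \<circ> p) has_vector_derivative (z * deriv h (p t))) (at t)"
      by (rule field_vector_diff_chain_at[OF pd])
    show "(\<phi> has_vector_derivative \<phi>' t) (at t)"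
      using phid[OF t] by (simp add: has_real_derivative_iff_has_vector_derivative)
    show "norm (z * deriv h (p t)) \<le> \<phi>' t" using bnd[OF t] by (simp add: p_def norm_mult)
  qed
  then have "cmod (h z - h 0) \<le> \<phi> 1 - \<phi> 0" by (simp add: p_def)
  then show ?thesis using norm_triangle_ineq2[of "h z" "h 0"] by linarith
qed

lemma radial_powr:
  fixes h :: "complex \<Rightarrow> complex"
  assumes hol: "h holomorphic_on ball 0 1" and z: "cmod z < 1" and b: "\<beta> \<noteq> 1" and E: "E \<ge> 0"
   and bnd: "\<And>u. cmod u \<le> cmod z \<Longrightarrow> cmod (deriv h u) \<le> E * (1 - cmod u) powr (-\<beta>)"
  shows "cmod (h z) \<le> cmod (h 0) + E / (\<beta> - 1) * ((1 - cmod z) powr (1 - \<beta>) - 1)"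
proof -
  define r where "r = cmod z"
  have r: "0 \<le> r" "r < 1" using z by (auto simp: r_def)
  define \<phi> where "\<phi> = (\<lambda>t::real. E / (\<beta> - 1) * (1 - t * r) powr (1 - \<beta>))"
  have pos: "0 < 1 - t * r" if "t \<le> 1" for t
  proof -
    have "t * r \<le> r" using mult_right_mono[of t 1 r] that r by simp
    then show ?thesis using r by linarith
  qed
  have "cmod (h z) \<le> cmod (h 0) + (\<phi> 1 - \<phi> 0)"
  proof (rule radial_general[OF hol z])
    show "continuous_on {0..1} \<phi>" unfolding \<phi>_def
      apply (intro continuous_intros) using pos by (fastforce simp: algebra_simps)+
    fix t :: real assume t: "0 < t" "t < 1"
    have p: "0 < 1 - t * r" using pos t by auto
    show "(\<phi> has_real_derivative E * r * (1 - t * r) powr (-\<beta>)) (at t)"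
    proof -
      have "(\<phi> has_real_derivative E / (\<beta> - 1) * ((1 - \<beta>) * (1 - t * r) powr (1 - \<beta> - 1) * (- r))) (at t)"
        unfolding \<phi>_def using p b by (auto intro!: derivative_eq_intros)
      moreover have "E / (\<beta> - 1) * ((1 - \<beta>) * (1 - t * r) powr (1 - \<beta> - 1) * (- r)) = E * r * (1 - t * r) powr (-\<beta>)"
        using b by (simp add: field_simps)
      ultimately show ?thesis by simp
    qed
    have "cmod (complex_of_real t * z) = t * r" using t by (simp add: norm_mult r_def)
    then have dd: "cmod (deriv h (complex_of_real t * z)) \<le> E * (1 - t * r) powr (-\<beta>)"
      using bnd[of "complex_of_real t * z"] t r unfolding r_def
      by (simp add: mult_left_le_one_le)
    show "cmod z * cmod (deriv h (complex_of_real t * z)) \<le> E * r * (1 - t * r) powr (-\<beta>)"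
      using r mult_left_mono[OF dd r(1)] by (simp add: r_def mult_ac)
  qed
  then show ?thesis by (simp add: \<phi>_def r_def diff_divide_distrib right_diff_distrib)
qed

lemma radial_ln:
  fixes h :: "complex \<Rightarrow> complex"
  assumes hol: "h holomorphic_on ball 0 1" and z: "cmod z < 1" and E: "E \<ge> 0"
   and bnd: "\<And>u. cmod u \<le> cmod z \<Longrightarrow> cmod (deriv h u) \<le> E / (1 - cmod u)"
  shows "cmod (h z) \<le> cmod (h 0) + E * ln (1 / (1 - cmod z))"
proof -
  define r where "r = cmod z"
  have r: "0 \<le> r" "r < 1" using z by (auto simp: r_def)
  define \<phi> where "\<phi> = (\<lambda>t::real. - E * ln (1 - t * r))"
  have pos: "0 < 1 - t * r" if "t \<le> 1" for t
  proof -
    have "t * r \<le> r" using mult_right_mono[of t 1 r] that r by simp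
    then show ?thesis using r by linarith
  qed
  have "cmod (h z) \<le> cmod (h 0) + (\<phi> 1 - \<phi> 0)"
  proof (rule radial_general[OF hol z])
    show "continuous_on {0..1} \<phi>" unfolding \<phi>_def
      apply (intro continuous_intros) using pos by (fastforce simp: algebra_simps)+
    fix t :: real assume t: "0 < t" "t < 1"
    have p: "0 < 1 - t * r" using pos t by auto
    show "(\<phi> has_real_derivative E * r / (1 - t * r)) (at t)"
    proof -
      have "(\<phi> has_real_derivative - E * ((- r) / (1 - t * r))) (at t)"
        unfolding \<phi>_def using p by (auto intro!: derivative_eq_intros)
      then show ?thesis by simp
    qed
    have "cmod (complex_of_real t * z) = t * r" using t by (simp add: norm_mult r_def)
    then have dd: "cmod (deriv h (complex_of_real t * z)) \<le> E / (1 - t * r)"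
      using bnd[of "complex_of_real t * z"] t r unfolding r_def
      by (simp add: mult_left_le_one_le)
    show "cmod z * cmod (deriv h (complex_of_real t * z)) \<le> E * r / (1 - t * r)"
      using r mult_left_mono[OF dd r(1)] by (simp add: r_def mult.commute)
  qed
  then show ?thesis using r by (simp add: \<phi>_def r_def ln_div)
qed

lemma radial_big:
  fixes h :: "complex \<Rightarrow> complex"
  assumes hol: "h holomorphic_on ball 0 1" and z: "cmod z < 1" and b: "\<beta> > 1" and E: "E \<ge> 0"
   and bnd: "\<And>u. cmod u \<le> cmod z \<Longrightarrow> cmod (deriv h u) \<le> E * (1 - cmod u) powr (-\<beta>)"
  shows "cmod (h z) \<le> (cmod (h 0) + E / (\<beta> - 1)) * (1 - cmod z) powr (1 - \<beta>)"
proof -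
  have 1: "cmod (h z) \<le> cmod (h 0) + E / (\<beta> - 1) * ((1 - cmod z) powr (1 - \<beta>) - 1)"
    using radial_powr[OF hol z _ E bnd] b by auto
  have x: "0 < 1 - cmod z" "1 - cmod z \<le> 1" using z by auto
  have "1 \<le> (1 - cmod z) powr (1 - \<beta>)"
  proof -
    have "(1 - cmod z) powr (\<beta> - 1) \<le> 1 powr (\<beta> - 1)" using x b by (intro powr_mono2) auto
    moreover have "(1 - cmod z) powr (1 - \<beta>) = inverse ((1 - cmod z) powr (\<beta> - 1))"
      using x by (simp add: powr_minus[symmetric])
    moreover have "0 < (1 - cmod z) powr (\<beta> - 1)" using x by simp
    ultimately show ?thesis by (simp add: one_le_inverse)
  qed
  then have "cmod (h 0) \<le> cmod (h 0) * (1 - cmod z) powr (1 - \<beta>)"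
    by (simp add: mult_le_cancel_left1)
  moreover have "E / (\<beta> - 1) * ((1 - cmod z) powr (1 - \<beta>) - 1) \<le> E / (\<beta> - 1) * (1 - cmod z) powr (1 - \<beta>)"
    using b E by (intro mult_left_mono) auto
  ultimately show ?thesis using 1 by (simp add: distrib_right)
qed

lemma radial_small:
  fixes h :: "complex \<Rightarrow> complex"
  assumes hol: "h holomorphic_on ball 0 1" and z: "cmod z < 1" and b: "\<beta> < 1" and E: "E \<ge> 0"
   and bnd: "\<And>u. cmod u \<le> cmod z \<Longrightarrow> cmod (deriv h u) \<le> E * (1 - cmod u) powr (-\<beta>)"
  shows "cmod (h z) \<le> cmod (h 0) + E / (1 - \<beta>)"
proof -
  have 1: "cmod (h z) \<le> cmod (h 0) + E / (\<beta> - 1) * ((1 - cmod z) powr (1 - \<beta>) - 1)"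
    using radial_powr[OF hol z _ E bnd] b by auto
  have x: "0 < 1 - cmod z" "1 - cmod z \<le> 1" using z by auto
  have "E / (\<beta> - 1) * ((1 - cmod z) powr (1 - \<beta>) - 1) = E / (1 - \<beta>) * (1 - (1 - cmod z) powr (1 - \<beta>))"
    using b by (simp add: field_simps)
  also have "\<dots> \<le> E / (1 - \<beta>)"
  proof -
    have "E * (1 - (1 - cmod z) powr (1 - \<beta>)) \<le> E * 1" using E by (intro mult_left_mono) auto
    then show ?thesis using b by (simp add: divide_right_mono)
  qed
  finally show ?thesis using 1 by simp
qed

lemma chain:
  fixes f :: "complex \<Rightarrow> complex"
  assumes hol: "f holomorphic_on ball 0 1" and a: "\<alpha> > 0" and R: "R < 1" and N: "N \<ge> 0"
   and hN: "\<And>u. cmod u \<le> R \<Longrightarrow> cmod ((deriv ^^ n) f u) \<le> N * (1 - cmod u) powr (-(\<alpha> + real n - 1))"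
   and Q: "Q = 2 * max 1 (1/\<alpha>)" and S0: "S0 = (\<Sum>i<n. cmod ((deriv ^^ i) f 0))"
  shows "m < n \<Longrightarrow> cmod u \<le> R \<Longrightarrow> cmod ((deriv ^^ (n - m)) f u) \<le> Q ^ m * (N + S0) * (1 - cmod u) powr (-(\<alpha> + real (n - m) - 1))"
proof (induction m arbitrary: u)
  case 0
  have "S0 \<ge> 0" unfolding S0 by (simp add: sum_nonneg)
  then have "N * (1 - cmod u) powr (-(\<alpha> + real n - 1)) \<le> (N + S0) * (1 - cmod u) powr (-(\<alpha> + real n - 1))"
    by (simp add: mult_right_mono)
  then have "cmod ((deriv ^^ n) f u) \<le> (N + S0) * (1 - cmod u) powr (-(\<alpha> + real n - 1))"
    using hN[OF 0(2)] by linarith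
  then show ?case by simp
next
  case (Suc m)
  define j where "j = n - Suc m"
  have j: "j \<ge> 1" "j < n" "n - m = Suc j" using Suc.prems unfolding j_def by auto
  have S0nn: "S0 \<ge> 0" unfolding S0 by (simp add: sum_nonneg)
  have Q1: "Q \<ge> 2" "Q / 2 \<ge> 1" "1 / \<alpha> \<le> Q / 2" unfolding Q by (simp_all add: max_def)
  have Qm: "Q ^ m \<ge> 1" using Q1 by (simp add: one_le_power)
  define E where "E = Q ^ m * (N + S0)"
  have E0: "E \<ge> 0" unfolding E_def using Q1 N S0nn by simp
  have hh: "(deriv ^^ j) f holomorphic_on ball 0 1" by (rule holomorphic_higher_deriv[OF hol]) auto
  have u1: "cmod u < 1" using Suc.prems R by simp
  have A1: "cmod ((deriv ^^ j) f u) \<le> (cmod ((deriv ^^ j) f 0) + E / ((\<alpha> + real j) - 1)) * (1 - cmod u) powr (1 - (\<alpha> + real j))"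
  proof (rule radial_big[OF hh u1 _ E0])
    show "1 < \<alpha> + real j" using a j by simp
    fix v assume v: "cmod v \<le> cmod u"
    have "cmod ((deriv ^^ (n - m)) f v) \<le> E * (1 - cmod v) powr (-(\<alpha> + real (n - m) - 1))"
      unfolding E_def using Suc.IH[of v] Suc.prems v by simp
    then show "cmod (deriv ((deriv ^^ j) f) v) \<le> E * (1 - cmod v) powr (-(\<alpha> + real j))"
      using j by simp
  qed
  have A2: "cmod ((deriv ^^ j) f 0) + E / ((\<alpha> + real j) - 1) \<le> Q ^ Suc m * (N + S0)"
  proof -
    have "cmod ((deriv ^^ j) f 0) \<le> S0" unfolding S0
      by (rule member_le_sum) (use j in auto)
    also have "\<dots> \<le> E" unfolding E_def using Qm N S0nn
      using mult_right_mono[OF Qm, of "N + S0"] by simp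
    also have "\<dots> \<le> Q / 2 * E" using mult_right_mono[OF Q1(2) E0] by simp
    finally have 1: "cmod ((deriv ^^ j) f 0) \<le> Q / 2 * E" .
    have "E / ((\<alpha> + real j) - 1) \<le> E / \<alpha>" using j a E0 by (intro divide_left_mono) auto
    also have "\<dots> = 1 / \<alpha> * E" by simp
    also have "\<dots> \<le> Q / 2 * E" using mult_right_mono[OF Q1(3) E0] by simp
    finally have 2: "E / ((\<alpha> + real j) - 1) \<le> Q / 2 * E" .
    have "Q / 2 * E + Q / 2 * E = Q ^ Suc m * (N + S0)" unfolding E_def by (simp add: field_simps)
    then show ?thesis using 1 2 by linarith
  qed
  have A3: "cmod ((deriv ^^ j) f u) \<le> Q ^ Suc m * (N + S0) * (1 - cmod u) powr (1 - (\<alpha> + real j))"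
    using mult_right_mono[OF A2 powr_ge_zero[of "1 - cmod u" "1 - (\<alpha> + real j)"]] A1 by linarith
  have ex: "1 - (\<alpha> + real j) = -(\<alpha> + real j - 1)" by simp
  show ?case using A3[unfolded ex, unfolded j_def] .
qed

lemma g_bound:
  assumes "vec_norm \<alpha> n g < ereal A" "k < n" "z \<in> ball 0 1"
  shows "coeff_weight \<alpha> n k z * cmod (g k z) \<le> A"
proof -
  have "coeff_norm \<alpha> n k (g k) \<le> vec_norm \<alpha> n g"
    unfolding vec_norm_def using assms(2) by (intro Max_ge) auto
  moreover have "ereal (coeff_weight \<alpha> n k z * cmod (g k z)) \<le> coeff_norm \<alpha> n k (g k)"
    unfolding coeff_norm_def using assms(3) by (intro SUP_upper)
  ultimately have "ereal (coeff_weight \<alpha> n k z * cmod (g k z)) < ereal A"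
    using assms(1) by (meson order_le_less_trans)
  then show ?thesis by simp
qed

lemma div_weight:
  fixes x :: real
  assumes "0 < x" "x powr p * a \<le> C"
  shows "a \<le> C * x powr (-p)"
proof -
  have "a = x powr p * a * x powr (-p)" using assms(1) by (simp add: powr_minus field_simps)
  also have "\<dots> \<le> C * x powr (-p)" using assms(2) by (intro mult_right_mono) auto
  finally show ?thesis .
qed

lemma one_minus_sq: "cmod u < 1 \<Longrightarrow> 1 - cmod u \<le> 1 - (cmod u)\<^sup>2"
proof -
  assume "cmod u < 1"
  then have "cmod u * cmod u \<le> cmod u" by (intro mult_left_le_one_le) auto
  then show ?thesis by (simp add: power2_eq_square)
qed

lemma one_minus_sq2: "cmod u < 1 \<Longrightarrow> 1 - (cmod u)\<^sup>2 \<le> 2 * (1 - cmod u)"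
proof -
  assume u: "cmod u < 1"
  have "1 - (cmod u)\<^sup>2 = (1 - cmod u) * (1 + cmod u)" by (simp add: power2_eq_square algebra_simps)
  also have "\<dots> \<le> (1 - cmod u) * 2" using u by (intro mult_left_mono) auto
  finally show ?thesis by simp
qed

lemma powr_cancel: "0 < (x::real) \<Longrightarrow> x powr a * x powr (-a) = 1"
  by (simp add: powr_add[symmetric])

lemma term_k:
  fixes x :: real
  assumes x: "0 < x" and k: "k < n" and P: "P \<ge> 0" and G: "G \<ge> 0"
    and hG: "x ^ (n - k) * G \<le> A" and hf: "Fv \<le> P * x powr (-(\<alpha> + real k - 1))" and F0: "Fv \<ge> 0"
  shows "x powr (\<alpha> + real n - 1) * Fv * G \<le> A * P"
proof -
  have ee: "\<alpha> + real n - 1 = (\<alpha> + real k - 1) + real (n - k)" using k by simp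
  have e: "x powr (\<alpha> + real n - 1) = x powr (\<alpha> + real k - 1) * x ^ (n - k)"
    by (subst ee) (simp only: powr_add powr_realpow[OF x])
  have "x powr (\<alpha> + real n - 1) * Fv * G \<le> x powr (\<alpha> + real n - 1) * (P * x powr (-(\<alpha> + real k - 1))) * G"
    using hf G by (intro mult_right_mono mult_left_mono) auto
  also have "\<dots> = P * (x ^ (n - k) * G) * (x powr (\<alpha> + real k - 1) * x powr (-(\<alpha> + real k - 1)))"
    unfolding e by (simp add: mult_ac)
  also have "\<dots> = P * (x ^ (n - k) * G)" by (simp only: powr_cancel[OF x] mult_1_right)
  also have "\<dots> \<le> P * A" using hG P by (intro mult_left_mono) auto
  finally show ?thesis by (simp add: mult_ac)
qed

lemma term0_big:
  fixes x :: real
  assumes x: "0 < x" and P: "P \<ge> 0" and G: "G \<ge> 0"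
    and hG: "x ^ n * G \<le> A" and hf: "Fv \<le> P * x powr (1 - \<alpha>)" and F0: "Fv \<ge> 0"
  shows "x powr (\<alpha> + real n - 1) * Fv * G \<le> A * P"
proof -
  have ee: "\<alpha> + real n - 1 = (\<alpha> - 1) + real n" by simp
  have e: "x powr (\<alpha> + real n - 1) = x powr (\<alpha> - 1) * x ^ n"
    by (subst ee) (simp only: powr_add powr_realpow[OF x])
  have "x powr (\<alpha> + real n - 1) * Fv * G \<le> x powr (\<alpha> + real n - 1) * (P * x powr (1 - \<alpha>)) * G"
    using hf G by (intro mult_right_mono mult_left_mono) auto
  also have "\<dots> = P * (x ^ n * G) * (x powr (\<alpha> - 1) * x powr (-(\<alpha> - 1)))"
    unfolding e by (simp add: mult_ac)
  also have "\<dots> = P * (x ^ n * G)" by (simp only: powr_cancel[OF x] mult_1_right)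
  also have "\<dots> \<le> P * A" using hG P by (intro mult_left_mono) auto
  finally show ?thesis by (simp add: mult_ac)
qed

lemma term0_small:
  fixes x :: real
  assumes x: "0 < x" and xy: "x \<le> y" and e0: "0 \<le> real n + \<alpha> - 1" and G: "G \<ge> 0"
    and hG: "y powr (real n + \<alpha> - 1) * G \<le> A" and hf: "Fv \<le> P" and F0: "Fv \<ge> 0"
  shows "x powr (\<alpha> + real n - 1) * Fv * G \<le> A * P"
proof -
  have w: "x powr (\<alpha> + real n - 1) \<le> y powr (real n + \<alpha> - 1)"
    using powr_mono2[OF e0 _ xy] x by (simp add: add.commute)
  have "x powr (\<alpha> + real n - 1) * Fv * G = (x powr (\<alpha> + real n - 1) * G) * Fv" by (simp add: mult_ac)
  also have "\<dots> \<le> A * P"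
  proof (rule mult_mono)
    show "x powr (\<alpha> + real n - 1) * G \<le> A" using w G hG
      by (meson mult_right_mono order_trans)
    show "0 \<le> A" using hG G by (meson order_trans powr_ge_zero zero_le_mult_iff)
  qed (use hf F0 in auto)
  finally show ?thesis .
qed

lemma term0_one:
  fixes x :: real
  assumes x: "0 < x" "x \<le> 1" and xy: "x \<le> y" and y1: "y \<le> 1" and y2: "y \<le> 2 * x"
    and S: "S \<ge> 0" and E: "E \<ge> 0" and G: "G \<ge> 0"
    and hG: "y ^ n * ln (2 / y) * G \<le> A" and hf: "Fv \<le> S + E * ln (1 / x)" and F0: "Fv \<ge> 0"
  shows "x powr (1 + real n - 1) * Fv * G \<le> A * ((1 / ln 2 + 1) * (S + E))"
proof -
  define L where "L = ln (2 / y)"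
  define K where "K = (1 / ln 2 + 1) * (S + E)"
  have y0: "0 < y" using x xy by simp
  have L2: "ln 2 \<le> L" unfolding L_def using y0 y1 by (simp add: divide_le_eq ln_div)
  have ln2: "0 < ln (2::real)" by simp
  have "1 / x \<le> 2 / y" using x y0 y2 by (simp add: field_simps)
  then have Lx: "ln (1 / x) \<le> L" unfolding L_def using x y0 by simp
  have lnx: "0 \<le> ln (1 / x)" using x by simp
  have "S \<le> S * (L / ln 2)" using L2 ln2 S mult_left_mono[OF L2 S] by (simp add: le_divide_eq)
  moreover have "E * ln (1 / x) \<le> E * L" using Lx E by (intro mult_left_mono)
  moreover have KL: "K * L = S * (L / ln 2) + E * L + (E * L / ln 2 + S * L)"
    unfolding K_def by (simp add: field_simps)
  moreover have "0 \<le> E * L / ln 2 + S * L"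
  proof -
    have L0: "0 \<le> L" using L2 ln2 by linarith
    show ?thesis using E S L0 ln2 by (intro add_nonneg_nonneg divide_nonneg_pos mult_nonneg_nonneg) auto
  qed
  ultimately have FK: "Fv \<le> K * L" using hf by linarith
  have K0: "K \<ge> 0" unfolding K_def using S E ln2 by simp
  have "x powr (1 + real n - 1) * Fv * G = x ^ n * Fv * G" using x by (simp add: powr_realpow)
  also have "\<dots> \<le> y ^ n * (K * L) * G"
    using x xy FK F0 G by (intro mult_right_mono mult_mono power_mono) auto
  also have "\<dots> = K * (y ^ n * L * G)" by (simp add: mult_ac)
  also have "\<dots> \<le> K * A" using hG K0 unfolding L_def by (intro mult_left_mono)
  finally show ?thesis unfolding K_def by (simp add: mult_ac)
qed

theorem proposition4p3:
  fixes \<alpha> :: real and n :: nat and F :: "complex \<Rightarrow> complex"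
  assumes "\<alpha> > 0" and "n \<ge> 1" and "F \<in> bloch_type (\<alpha> + real n)"
  shows "\<exists>A>0. \<forall>g :: nat \<Rightarrow> complex \<Rightarrow> complex.
           (\<forall>k<n. g k holomorphic_on ball 0 1) \<and> vec_norm \<alpha> n g < ereal A \<longrightarrow>
           (\<forall>f. f holomorphic_on ball 0 1 \<and>
                (\<forall>z\<in>ball 0 1. (deriv ^^ n) f z + (\<Sum>k<n. (deriv ^^ k) f z * g k z) = F z)
                \<longrightarrow> f \<in> bloch_type \<alpha>)"
proof -
  have a: "\<alpha> > 0" and n1: "n \<ge> 1" using assms by auto
  from assms(3) have Fhol: "F holomorphic_on ball 0 1"
    and "\<exists>C. \<forall>z\<in>ball 0 1. (1 - (cmod z)\<^sup>2) powr (\<alpha> + real n) * cmod (deriv F z) \<le> C"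
    unfolding bloch_type_def by auto
  then obtain CF where CF: "\<And>z. z \<in> ball 0 1 \<Longrightarrow> (1 - (cmod z)\<^sup>2) powr (\<alpha> + real n) * cmod (deriv F z) \<le> CF"
    by blast
  have CF0: "CF \<ge> 0"
  proof -
    have "cmod (deriv F 0) \<le> CF" using CF[of 0] by simp
    then show ?thesis using norm_ge_zero[of "deriv F 0"] by linarith
  qed
  define KF where "KF = cmod (F 0) + CF / (\<alpha> + real n - 1)"
  have KF0: "KF \<ge> 0" unfolding KF_def using CF0 a n1 by simp
  have Fb: "cmod (F z) \<le> KF * (1 - cmod z) powr (1 - (\<alpha> + real n))" if z: "cmod z < 1" for z
    unfolding KF_def
  proof (rule radial_big[OF Fhol z _ CF0])
    show "1 < \<alpha> + real n" using a n1 by simp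
    fix u assume "cmod u \<le> cmod z"
    then have u: "cmod u < 1" using z by simp
    have w: "(1 - cmod u) powr (\<alpha> + real n) \<le> (1 - (cmod u)\<^sup>2) powr (\<alpha> + real n)"
      using one_minus_sq[OF u] u a by (intro powr_mono2) auto
    have "(1 - cmod u) powr (\<alpha> + real n) * cmod (deriv F u) \<le> CF"
      using order_trans[OF mult_right_mono[OF w norm_ge_zero] CF[of u]] u by simp
    then show "cmod (deriv F u) \<le> CF * (1 - cmod u) powr (-(\<alpha> + real n))"
      by (rule div_weight[rotated]) (use u in simp)
  qed
  define Q where "Q = 2 * max 1 (1/\<alpha>)"
  have Q1: "Q \<ge> 1" unfolding Q_def by (simp add: max_def)
  have Qp: "\<And>j. Q ^ j \<ge> 1" using Q1 by (simp add: one_le_power)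
  define C0 where "C0 = (if \<alpha> > 1 then 1 + Q ^ (n - 1) / (\<alpha> - 1)
      else if \<alpha> = 1 then (1 / ln 2 + 1) * (1 + Q ^ (n - 1)) else 1 + Q ^ (n - 1) / (1 - \<alpha>))"
  have C00: "C0 \<ge> 0" unfolding C0_def using Q1 by simp
  define Ct where "Ct = real n * (Q ^ n + C0)"
  have Ct0: "Ct > 0" unfolding Ct_def using n1 C00 Qp[of n] by simp
  define A where "A = 1 / (2 * Ct)"
  have A0: "A > 0" unfolding A_def using Ct0 by simp
  show ?thesis
  proof (rule exI[of _ A], intro conjI allI impI)
    show "A > 0" by (rule A0)
    fix g :: "nat \<Rightarrow> complex \<Rightarrow> complex" and f :: "complex \<Rightarrow> complex"
    assume gh: "(\<forall>k<n. g k holomorphic_on ball 0 1) \<and> vec_norm \<alpha> n g < ereal A"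
    assume fh: "f holomorphic_on ball 0 1 \<and>
                (\<forall>z\<in>ball 0 1. (deriv ^^ n) f z + (\<Sum>k<n. (deriv ^^ k) f z * g k z) = F z)"
    then have fhol: "f holomorphic_on ball 0 1"
      and eq: "\<And>z. z \<in> ball 0 1 \<Longrightarrow> (deriv ^^ n) f z + (\<Sum>k<n. (deriv ^^ k) f z * g k z) = F z"
      by auto
    have gb: "\<And>k z. k < n \<Longrightarrow> z \<in> ball 0 1 \<Longrightarrow> coeff_weight \<alpha> n k z * cmod (g k z) \<le> A"
      using g_bound gh by blast
    define S0 where "S0 = (\<Sum>i<n. cmod ((deriv ^^ i) f 0))"
    have S00: "S0 \<ge> 0" unfolding S0_def by (simp add: sum_nonneg)
    have f0S: "cmod (f 0) \<le> S0"
    proof -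
      have "cmod ((deriv ^^ 0) f 0) \<le> S0" unfolding S0_def by (rule member_le_sum) (use n1 in auto)
      then show ?thesis by simp
    qed
    define M where "M = 2 * KF + S0"
    have M0: "M \<ge> 0" unfolding M_def using KF0 S00 by simp
    have hn: "(deriv ^^ n) f holomorphic_on ball 0 1" by (rule holomorphic_higher_deriv[OF fhol]) auto
    have key: "(1 - cmod u) powr (\<alpha> + real n - 1) * cmod ((deriv ^^ n) f u) \<le> M"
      if \<rho>: "0 \<le> \<rho>" "\<rho> < 1" and u: "cmod u \<le> \<rho>" for \<rho> u
    proof -
      define \<phi> where "\<phi> = (\<lambda>u. (1 - cmod u) powr (\<alpha> + real n - 1) * cmod ((deriv ^^ n) f u))"
      have sub: "cball 0 \<rho> \<subseteq> ball (0::complex) 1" using \<rho> by auto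
      have c1: "continuous_on (cball 0 \<rho>) ((deriv ^^ n) f)"
        using holomorphic_on_imp_continuous_on[OF hn] sub by (rule continuous_on_subset)
      have cont: "continuous_on (cball 0 \<rho>) \<phi>"
        unfolding \<phi>_def
        apply (intro continuous_intros c1)
        using \<rho> by auto
      obtain z0 where z0: "z0 \<in> cball 0 \<rho>" and z0max: "\<And>y. y \<in> cball 0 \<rho> \<Longrightarrow> \<phi> y \<le> \<phi> z0"
        using continuous_attains_sup[OF compact_cball _ cont] \<rho> by auto
      define N where "N = \<phi> z0"
      have N0: "N \<ge> 0" unfolding N_def \<phi>_def by simp
      have hN: "cmod ((deriv ^^ n) f v) \<le> N * (1 - cmod v) powr (-(\<alpha> + real n - 1))"
        if v: "cmod v \<le> \<rho>" for v
      proof (rule div_weight)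
        show "0 < 1 - cmod v" using v \<rho> by simp
        show "(1 - cmod v) powr (\<alpha> + real n - 1) * cmod ((deriv ^^ n) f v) \<le> N"
          using z0max[of v] v unfolding N_def \<phi>_def by simp
      qed
      have ch: "cmod ((deriv ^^ (n - m)) f v) \<le> Q ^ m * (N + S0) * (1 - cmod v) powr (-(\<alpha> + real (n - m) - 1))"
        if "m < n" "cmod v \<le> \<rho>" for m v
        using chain[OF fhol a \<rho>(2) N0 hN Q_def S0_def] that by blast
      define E1 where "E1 = Q ^ (n - 1) * (N + S0)"
      have E10: "E1 \<ge> 0" unfolding E1_def using Qp N0 S00 by (meson add_nonneg_nonneg order_trans zero_le_mult_iff zero_le_one)
      have f1: "cmod (deriv f v) \<le> E1 * (1 - cmod v) powr (-\<alpha>)" if "cmod v \<le> \<rho>" for v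
      proof -
        have "n - (n - 1) = 1" using n1 by simp
        then show ?thesis using ch[of "n - 1" v] that n1 unfolding E1_def by simp
      qed
      have z0b: "cmod z0 < 1" using z0 \<rho> by simp
      have z0ball: "z0 \<in> ball 0 1" using z0b by simp
      define x where "x = 1 - cmod z0"
      define y where "y = 1 - (cmod z0)\<^sup>2"
      have x0: "0 < x" "x \<le> 1" unfolding x_def using z0b by auto
      have xy: "x \<le> y" unfolding x_def y_def using one_minus_sq[OF z0b] .
      have y2: "y \<le> 2 * x" unfolding x_def y_def using one_minus_sq2[OF z0b] .
      have y1: "y \<le> 1" unfolding y_def by simp
      define w where "w = x powr (\<alpha> + real n - 1)"
      have w0: "w \<ge> 0" unfolding w_def by simp
      have tF: "w * cmod (F z0) \<le> KF"
      proof -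
        have "w * cmod (F z0) \<le> w * (KF * x powr (1 - (\<alpha> + real n)))"
          using Fb[OF z0b] w0 unfolding x_def by (intro mult_left_mono) auto
        also have "\<dots> = KF * (x powr (\<alpha> + real n - 1) * x powr (-(\<alpha> + real n - 1)))"
          unfolding w_def by (simp add: mult_ac)
        also have "\<dots> = KF" by (simp only: powr_cancel[OF x0(1)] mult_1_right)
        finally show ?thesis .
      qed
      have tk: "w * (cmod ((deriv ^^ k) f z0) * cmod (g k z0)) \<le> A * ((Q ^ n + C0) * (N + S0))"
        if k: "k < n" for k
      proof (cases "k \<ge> 1")
        case True
        have gk: "x ^ (n - k) * cmod (g k z0) \<le> A"
        proof -
          have "x ^ (n - k) \<le> y ^ (n - k)" using xy x0 by (intro power_mono) auto
          then have "x ^ (n - k) * cmod (g k z0) \<le> y ^ (n - k) * cmod (g k z0)"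
            by (intro mult_right_mono) auto
          also have "\<dots> \<le> A" using gb[OF k z0ball] True unfolding coeff_weight_def y_def by simp
          finally show ?thesis .
        qed
        have fk: "cmod ((deriv ^^ k) f z0) \<le> Q ^ (n - k) * (N + S0) * x powr (-(\<alpha> + real k - 1))"
        proof -
          have "n - (n - k) = k" using k by simp
          then show ?thesis using ch[of "n - k" z0] k True z0 unfolding x_def by simp
        qed
        have "x powr (\<alpha> + real n - 1) * cmod ((deriv ^^ k) f z0) * cmod (g k z0) \<le> A * (Q ^ (n - k) * (N + S0))"
          by (rule term_k[OF x0(1) k _ _ gk fk]) (use Q1 N0 S00 in simp_all)
        then have "w * (cmod ((deriv ^^ k) f z0) * cmod (g k z0)) \<le> A * (Q ^ (n - k) * (N + S0))"
          unfolding w_def by (simp only: mult.assoc)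
        also have "\<dots> \<le> A * ((Q ^ n + C0) * (N + S0))"
        proof -
          have "Q ^ (n - k) \<le> Q ^ n" using Q1 by (intro power_increasing) auto
          then have "Q ^ (n - k) \<le> Q ^ n + C0" using C00 by linarith
          then show ?thesis using A0 N0 S00 by (intro mult_left_mono mult_right_mono) auto
        qed
        finally show ?thesis .
      next
        case False
        then have k0: "k = 0" by simp
        have t0: "w * (cmod (f z0) * cmod (g 0 z0)) \<le> A * (C0 * (N + S0))"
        proof -
          have gw: "coeff_weight \<alpha> n 0 z0 * cmod (g 0 z0) \<le> A" using gb[OF _ z0ball] n1 by simp
          have bndf: "\<And>u. cmod u \<le> cmod z0 \<Longrightarrow> cmod (deriv f u) \<le> E1 * (1 - cmod u) powr (-\<alpha>)"
            using f1 z0 by auto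
          consider (big) "\<alpha> > 1" | (one) "\<alpha> = 1" | (small) "\<alpha> < 1" by linarith
          then show ?thesis
          proof cases
            case big
            have P: "cmod (f z0) \<le> (cmod (f 0) + E1 / (\<alpha> - 1)) * x powr (1 - \<alpha>)"
              unfolding x_def by (rule radial_big[OF fhol z0b big E10 bndf])
            have gw': "x ^ n * cmod (g 0 z0) \<le> A"
            proof -
              have "x ^ n * cmod (g 0 z0) \<le> y ^ n * cmod (g 0 z0)"
                using xy x0 by (intro mult_right_mono power_mono) auto
              also have "\<dots> \<le> A" using gw big unfolding coeff_weight_def y_def by simp
              finally show ?thesis .
            qed
            have "x powr (\<alpha> + real n - 1) * cmod (f z0) * cmod (g 0 z0) \<le> A * (cmod (f 0) + E1 / (\<alpha> - 1))"
              by (rule term0_big[OF x0(1) _ _ gw' P]) (use E10 big in auto)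
            then have "w * (cmod (f z0) * cmod (g 0 z0)) \<le> A * (cmod (f 0) + E1 / (\<alpha> - 1))"
              unfolding w_def by (simp only: mult.assoc)
            also have "\<dots> \<le> A * (C0 * (N + S0))"
            proof -
              have "E1 / (\<alpha> - 1) = Q ^ (n - 1) / (\<alpha> - 1) * (N + S0)" unfolding E1_def by simp
              then have "cmod (f 0) + E1 / (\<alpha> - 1) \<le> C0 * (N + S0)"
                using f0S N0 big unfolding C0_def by (simp add: algebra_simps)
              then show ?thesis using A0 by (intro mult_left_mono) auto
            qed
            finally show ?thesis .
          next
            case small
            have P: "cmod (f z0) \<le> cmod (f 0) + E1 / (1 - \<alpha>)"
              by (rule radial_small[OF fhol z0b small E10 bndf])
            have gw': "y powr (real n + \<alpha> - 1) * cmod (g 0 z0) \<le> A"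
              using gw small unfolding coeff_weight_def y_def by simp
            have "x powr (\<alpha> + real n - 1) * cmod (f z0) * cmod (g 0 z0) \<le> A * (cmod (f 0) + E1 / (1 - \<alpha>))"
              by (rule term0_small[OF x0(1) xy _ _ gw' P]) (use n1 a in auto)
            then have "w * (cmod (f z0) * cmod (g 0 z0)) \<le> A * (cmod (f 0) + E1 / (1 - \<alpha>))"
              unfolding w_def by (simp only: mult.assoc)
            also have "\<dots> \<le> A * (C0 * (N + S0))"
            proof -
              have "E1 / (1 - \<alpha>) = Q ^ (n - 1) / (1 - \<alpha>) * (N + S0)" unfolding E1_def by simp
              then have "cmod (f 0) + E1 / (1 - \<alpha>) \<le> C0 * (N + S0)"
                using f0S N0 small unfolding C0_def by (simp add: algebra_simps)
              then show ?thesis using A0 by (intro mult_left_mono) auto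
            qed
            finally show ?thesis .
          next
            case one
            have bndf': "\<And>u. cmod u \<le> cmod z0 \<Longrightarrow> cmod (deriv f u) \<le> E1 / (1 - cmod u)"
            proof -
              fix u assume u: "cmod u \<le> cmod z0"
              have "(1 - cmod u) powr (-\<alpha>) = 1 / (1 - cmod u)" using one u z0b
                by (simp add: powr_minus_divide)
              then show "cmod (deriv f u) \<le> E1 / (1 - cmod u)" using bndf[OF u] by simp
            qed
            have P: "cmod (f z0) \<le> cmod (f 0) + E1 * ln (1 / x)"
              unfolding x_def by (rule radial_ln[OF fhol z0b E10 bndf'])
            have gw': "y ^ n * ln (2 / y) * cmod (g 0 z0) \<le> A"
              using gw one unfolding coeff_weight_def y_def by simp
            have "x powr (1 + real n - 1) * cmod (f z0) * cmod (g 0 z0) \<le> A * ((1 / ln 2 + 1) * (cmod (f 0) + E1))"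
              by (rule term0_one[OF x0 xy y1 y2 _ E10 _ gw' P]) auto
            then have "w * (cmod (f z0) * cmod (g 0 z0)) \<le> A * ((1 / ln 2 + 1) * (cmod (f 0) + E1))"
              unfolding w_def one by (simp add: mult.assoc)
            also have "\<dots> \<le> A * (C0 * (N + S0))"
            proof -
              have "cmod (f 0) + E1 \<le> (1 + Q ^ (n - 1)) * (N + S0)"
                using f0S N0 unfolding E1_def by (simp add: algebra_simps)
              then have "(1 / ln 2 + 1) * (cmod (f 0) + E1) \<le> (1 / ln 2 + 1) * ((1 + Q ^ (n - 1)) * (N + S0))"
                by (intro mult_left_mono) auto
              then have "(1 / ln 2 + 1) * (cmod (f 0) + E1) \<le> C0 * (N + S0)"
                using one unfolding C0_def by (simp add: mult.assoc)
              then show ?thesis using A0 by (intro mult_left_mono) auto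
            qed
            finally show ?thesis .
          qed
        qed
        also have "\<dots> \<le> A * ((Q ^ n + C0) * (N + S0))"
          using A0 N0 S00 Qp[of n] by (intro mult_left_mono mult_right_mono) auto
        finally show ?thesis using k0 by simp
      qed
      have "cmod ((deriv ^^ n) f z0) = cmod (F z0 - (\<Sum>k<n. (deriv ^^ k) f z0 * g k z0))"
        using eq[OF z0ball] by (metis add_diff_cancel_right')
      also have "\<dots> \<le> cmod (F z0) + (\<Sum>k<n. cmod ((deriv ^^ k) f z0) * cmod (g k z0))"
        by (rule order_trans[OF norm_triangle_ineq4]) (simp add: norm_mult order_trans[OF norm_sum])
      finally have tri: "cmod ((deriv ^^ n) f z0) \<le> cmod (F z0) + (\<Sum>k<n. cmod ((deriv ^^ k) f z0) * cmod (g k z0))" .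
      have "N = w * cmod ((deriv ^^ n) f z0)" unfolding N_def \<phi>_def w_def x_def by simp
      also have "\<dots> \<le> w * cmod (F z0) + (\<Sum>k<n. w * (cmod ((deriv ^^ k) f z0) * cmod (g k z0)))"
        using mult_left_mono[OF tri w0] by (simp add: distrib_left sum_distrib_left)
      also have "\<dots> \<le> KF + (\<Sum>k<n. A * ((Q ^ n + C0) * (N + S0)))"
        using tF tk by (intro add_mono sum_mono) auto
      also have "\<dots> = KF + A * Ct * (N + S0)" unfolding Ct_def by (simp add: mult_ac)
      also have "\<dots> = KF + (N + S0) / 2" unfolding A_def using Ct0 by simp
      finally have "N \<le> KF + (N + S0) / 2" .
      then have "N \<le> M" unfolding M_def by (simp add: field_simps)
      moreover have "\<phi> u \<le> N" using z0max[of u] u unfolding N_def by simp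
      ultimately show ?thesis unfolding \<phi>_def by simp
    qed
    have hall: "cmod ((deriv ^^ n) f v) \<le> M * (1 - cmod v) powr (-(\<alpha> + real n - 1))"
      if v: "cmod v \<le> cmod z" "cmod z < 1" for v z
    proof (rule div_weight)
      show "0 < 1 - cmod v" using v by simp
      show "(1 - cmod v) powr (\<alpha> + real n - 1) * cmod ((deriv ^^ n) f v) \<le> M"
        using key[of "cmod z" v] v by simp
    qed
    have fd: "cmod (deriv f z) \<le> Q ^ (n - 1) * (M + S0) * (1 - cmod z) powr (-\<alpha>)"
      if z: "cmod z < 1" for z
    proof -
      have "cmod ((deriv ^^ (n - (n - 1))) f z) \<le> Q ^ (n - 1) * (M + S0) * (1 - cmod z) powr (-(\<alpha> + real (n - (n - 1)) - 1))"
        using chain[OF fhol a z M0 hall[OF _ z] Q_def S0_def, of "n - 1" z] n1 by simp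
      moreover have "n - (n - 1) = 1" using n1 by simp
      ultimately show ?thesis by simp
    qed
    show "f \<in> bloch_type \<alpha>"
      unfolding bloch_type_def
    proof (intro CollectI conjI fhol exI ballI)
      fix z :: complex assume "z \<in> ball 0 1"
      then have z: "cmod z < 1" by simp
      have x: "0 < 1 - cmod z" using z by simp
      have "(1 - (cmod z)\<^sup>2) powr \<alpha> * cmod (deriv f z) \<le> (2 * (1 - cmod z)) powr \<alpha> * (Q ^ (n - 1) * (M + S0) * (1 - cmod z) powr (-\<alpha>))"
      proof (rule mult_mono)
        show "(1 - (cmod z)\<^sup>2) powr \<alpha> \<le> (2 * (1 - cmod z)) powr \<alpha>"
          using one_minus_sq2[OF z] one_minus_sq[OF z] x a by (intro powr_mono2) auto
      qed (use fd[OF z] in auto)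
      also have "\<dots> = 2 powr \<alpha> * Q ^ (n - 1) * (M + S0) * ((1 - cmod z) powr \<alpha> * (1 - cmod z) powr (-\<alpha>))"
      proof -
        have pm: "(2 * (1 - cmod z)) powr \<alpha> = 2 powr \<alpha> * (1 - cmod z) powr \<alpha>"
          using x powr_mult[of 2 "1 - cmod z" \<alpha>] by simp
        show ?thesis unfolding pm by (simp only: mult_ac)
      qed
      also have "\<dots> = 2 powr \<alpha> * Q ^ (n - 1) * (M + S0)" by (simp only: powr_cancel[OF x] mult_1_right)
      finally show "(1 - (cmod z)\<^sup>2) powr \<alpha> * cmod (deriv f z) \<le> 2 powr \<alpha> * Q ^ (n - 1) * (M + S0)" .
    qed
  qed
qed

end
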